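(* Let $n\ge 2$ and $x\in\mathbb{C}$. Then, as formal power series in $z$, $$M_{xJ_n+B_n}(z)=\frac{nxz\,\frac{d}{dz}\big(z\tilde M_{B_n}(z)\big)}{1-nxz\,\tilde M_{B_n}(z)}+M_{B_n}(z).$$
   Context: $J_n$ is the $n\times n$ all-ones matrix, and $B_n=i\,M$ where $M$ is the $n\times n$ matrix with zero diagonal, entries $1$ above and $-1$ below the diagonal. For an $n\times n$ matrix $C$, $M_C(z)=\operatorname{Tr}((I-zC)^{-1})=\sum_{m\ge0}\operatorname{Tr}(C^m)z^m$. Define the state $\omega(C)=\frac1n\sum_{i,j=1}^n c_{ij}$ for $C=[c_{ij}]$, and $\tilde M_{B_n}(z)=\omega((I-zB_n)^{-1})=\sum_{m\ge0}\omega(B_n^m)z^m$. *)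

theory Defs
  imports "Jordan_Normal_Form.Matrix" "HOL-Computational_Algebra.Formal_Power_Series"
begin

definition J_mat :: "nat \<Rightarrow> complex mat" where
  "J_mat n = mat n n (\<lambda>_. 1)"

definition B_mat :: "nat \<Rightarrow> complex mat" where
  "B_mat n = mat n n (\<lambda>(i,j). if i < j then \<i> else if j < i then - \<i> else 0)"

definition mat_trace :: "complex mat \<Rightarrow> complex" where
  "mat_trace C = (\<Sum>i<dim_row C. C $$ (i,i))"

definition omega :: "complex mat \<Rightarrow> complex" where
  "omega C = (1 / of_nat (dim_row C)) * (\<Sum>i<dim_row C. \<Sum>j<dim_col C. C $$ (i,j))"

definition M_fps :: "complex mat \<Rightarrow> complex fps" where
  "M_fps C = Abs_fps (\<lambda>m. mat_trace (C ^\<^sub>m m))"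

definition Mt_fps :: "complex mat \<Rightarrow> complex fps" where
  "Mt_fps C = Abs_fps (\<lambda>m. omega (C ^\<^sub>m m))"

end

theory Submission
  imports Defs
begin

definition sumall :: "complex mat \<Rightarrow> complex" where
  "sumall C = (\<Sum>i<dim_row C. \<Sum>j<dim_col C. C $$ (i,j))"

lemma pow_add_mat: "(A::complex mat) \<in> carrier_mat n n \<Longrightarrow> A ^\<^sub>m j * A ^\<^sub>m k = A ^\<^sub>m (j + k)"
proof (induction k)
  case 0 then show ?case by simp
next
  case (Suc k)
  have "A ^\<^sub>m j * A ^\<^sub>m Suc k = (A ^\<^sub>m j * A ^\<^sub>m k) * A"
    using Suc.prems by (simp, subst assoc_mult_mat[of _ n n _ n _ n], auto)
  then show ?case using Suc by simp
qed

lemma pow_Suc_left: "(A::complex mat) \<in> carrier_mat n n \<Longrightarrow> A ^\<^sub>m Suc m = A * A ^\<^sub>m m"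
  using pow_add_mat[of A n 1 m] by simp

lemma J_carrier[simp]: "J_mat n \<in> carrier_mat n n" by (simp add: J_mat_def)
lemma B_carrier[simp]: "B_mat n \<in> carrier_mat n n" by (simp add: B_mat_def)
lemma B_dims[simp]: "dim_row (B_mat n) = n" "dim_col (B_mat n) = n" by (simp_all add: B_mat_def)

lemma sumall_J: assumes "C \<in> carrier_mat n n" "D \<in> carrier_mat n n"
  shows "sumall (C * J_mat n * D) = sumall C * sumall D"
proof -
  have "sumall (C * J_mat n * D) = (\<Sum>i<n. \<Sum>j<n. \<Sum>k<n. (\<Sum>l<n. C $$ (i,l)) * D $$ (k,j))"
    using assms unfolding sumall_def J_mat_def
    by (auto simp: scalar_prod_def lessThan_atLeast0 sum_distrib_right intro!: sum.cong)
  also have "\<dots> = (\<Sum>i<n. (\<Sum>l<n. C $$ (i,l)) * (\<Sum>j<n. \<Sum>k<n. D $$ (k,j)))"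
    by (simp add: sum_distrib_left)
  also have "\<dots> = sumall C * (\<Sum>j<n. \<Sum>k<n. D $$ (k,j))"
    using assms unfolding sumall_def by (simp add: sum_distrib_right)
  also have "\<dots> = sumall C * sumall D"
    using assms unfolding sumall_def by (subst sum.swap, simp)
  finally show ?thesis .
qed

lemma trace_J: assumes "C \<in> carrier_mat n n" "D \<in> carrier_mat n n"
  shows "mat_trace (C * J_mat n * D) = sumall (D * C)"
proof -
  have "mat_trace (C * J_mat n * D) = (\<Sum>i<n. \<Sum>k<n. (\<Sum>l<n. C $$ (i,l)) * D $$ (k,i))"
    using assms unfolding mat_trace_def J_mat_def
    by (auto simp: scalar_prod_def lessThan_atLeast0 sum_distrib_right intro!: sum.cong)
  also have "\<dots> = (\<Sum>i<n. \<Sum>k<n. \<Sum>l<n. D $$ (k,i) * C $$ (i,l))"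
    by (simp add: sum_distrib_left sum_distrib_right mult.commute)
  also have "\<dots> = (\<Sum>k<n. \<Sum>i<n. \<Sum>l<n. D $$ (k,i) * C $$ (i,l))"
    by (rule sum.swap)
  also have "\<dots> = (\<Sum>k<n. \<Sum>l<n. \<Sum>i<n. D $$ (k,i) * C $$ (i,l))"
    by (rule sum.cong[OF refl], rule sum.swap)
  also have "\<dots> = sumall (D * C)"
    using assms unfolding sumall_def
    by (auto simp: scalar_prod_def lessThan_atLeast0 intro!: sum.cong)
  finally show ?thesis .
qed

lemma mult_carrier_nn[simp]: "A \<in> carrier_mat n n \<Longrightarrow> B \<in> carrier_mat n n \<Longrightarrow> A * B \<in> carrier_mat n n"
  by (rule mult_carrier_mat)

lemma sumall_add: "A \<in> carrier_mat n n \<Longrightarrow> B \<in> carrier_mat n n \<Longrightarrow> sumall (A + B) = sumall A + sumall B"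
  unfolding sumall_def by (simp add: sum.distrib)
lemma sumall_smult: "sumall (c \<cdot>\<^sub>m A) = c * sumall A"
  unfolding sumall_def by (simp add: sum_distrib_left)
lemma trace_add: "A \<in> carrier_mat n n \<Longrightarrow> B \<in> carrier_mat n n \<Longrightarrow> mat_trace (A + B) = mat_trace A + mat_trace B"
  unfolding mat_trace_def by (simp add: sum.distrib)
lemma trace_smult: "A \<in> carrier_mat n n \<Longrightarrow> mat_trace (c \<cdot>\<^sub>m A) = c * mat_trace A"
  unfolding mat_trace_def by (simp add: sum_distrib_left)

lemma DS: "(\<Sum>i<Suc p. \<Sum>l<i. f l) = (\<Sum>l<p. of_nat (p - l) * (f l :: complex))"
proof (induction p)
  case 0 then show ?case by simp
next
  case (Suc p)
  have "(\<Sum>i<Suc (Suc p). \<Sum>l<i. f l) = (\<Sum>l<p. of_nat (p - l) * f l) + (\<Sum>l<Suc p. f l)"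
    using Suc by simp
  also have "\<dots> = (\<Sum>l<p. (of_nat (p - l) + 1) * f l) + f p"
    by (simp add: distrib_right sum.distrib)
  also have "(\<Sum>l<p. (of_nat (p - l) + 1) * f l) = (\<Sum>l<p. of_nat (Suc p - l) * f l)"
    by (rule sum.cong) (auto simp: Suc_diff_le)
  finally show ?case by simp
qed


context
  fixes n :: nat and x :: complex
begin

abbreviation "AA \<equiv> x \<cdot>\<^sub>m J_mat n + B_mat n"
abbreviation "BB \<equiv> B_mat n"

lemma AA_carrier[simp]: "AA \<in> carrier_mat n n" by simp

lemma AA_left: "M \<in> carrier_mat n k \<Longrightarrow> AA * M = BB * M + x \<cdot>\<^sub>m (J_mat n * M)"
proof -
  assume M: "M \<in> carrier_mat n k"
  have "AA * M = (x \<cdot>\<^sub>m J_mat n) * M + BB * M"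
    by (rule add_mult_distrib_mat[of _ n n]) (use M in auto)
  also have "\<dots> = x \<cdot>\<^sub>m (J_mat n * M) + BB * M"
    using M by (simp add: mult_smult_assoc_mat[of _ n n])
  also have "\<dots> = BB * M + x \<cdot>\<^sub>m (J_mat n * M)"
    by (rule comm_add_mat[of _ n k]) (use M in \<open>auto intro!: smult_carrier_mat mult_carrier_mat[of "J_mat n" n n M k] mult_carrier_mat[of BB n n M k]\<close>)
  finally show ?thesis .
qed
lemma AA_right: "M \<in> carrier_mat k n \<Longrightarrow> M * AA = M * BB + x \<cdot>\<^sub>m (M * J_mat n)"
proof -
  assume M: "M \<in> carrier_mat k n"
  have "M * AA = M * (x \<cdot>\<^sub>m J_mat n) + M * BB"
    by (rule mult_add_distrib_mat[of _ k n _ n]) (use M in auto)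
  also have "\<dots> = x \<cdot>\<^sub>m (M * J_mat n) + M * BB"
    using M by (simp add: mult_smult_distrib[of M k n "J_mat n" n])
  also have "\<dots> = M * BB + x \<cdot>\<^sub>m (M * J_mat n)"
    by (rule comm_add_mat[of _ k n]) (use M in \<open>auto intro!: mult_carrier_mat[of _ k n]\<close>)
  finally show ?thesis .
qed

lemma L_lemma: "D \<in> carrier_mat n n \<Longrightarrow> sumall (D * AA ^\<^sub>m m) =
   sumall (D * BB ^\<^sub>m m) + x * (\<Sum>i<m. sumall (D * BB ^\<^sub>m (m - 1 - i)) * sumall (AA ^\<^sub>m i))"
proof (induction m arbitrary: D)
  case 0 then show ?case by simp
next
  case (Suc m)
  have D: "D \<in> carrier_mat n n" by fact
  have "D * AA ^\<^sub>m Suc m = (D * AA) * AA ^\<^sub>m m"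
    using D by (subst pow_Suc_left[of _ n], simp, subst assoc_mult_mat[of _ n n _ n _ n], auto)
  also have "\<dots> = (D * BB) * AA ^\<^sub>m m + x \<cdot>\<^sub>m ((D * J_mat n) * AA ^\<^sub>m m)"
    using D by (simp add: AA_right[of _ n], subst add_mult_distrib_mat[of _ n n _ _ n], auto simp: mult_smult_assoc_mat[of "D * J_mat n" n n _ n])
  finally have e: "sumall (D * AA ^\<^sub>m Suc m) = sumall ((D * BB) * AA ^\<^sub>m m) + x * (sumall D * sumall (AA ^\<^sub>m m))"
    using D by (simp add: sumall_add[of _ n] sumall_smult sumall_J[of _ n] del: pow_mat.simps)
  have IH: "sumall ((D * BB) * AA ^\<^sub>m m) = sumall (D * BB ^\<^sub>m Suc m) + x * (\<Sum>i<m. sumall (D * BB ^\<^sub>m (Suc m - 1 - i)) * sumall (AA ^\<^sub>m i))"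
  proof -
    have k: "\<And>k. (D * BB) * BB ^\<^sub>m k = D * BB ^\<^sub>m Suc k"
      using D by (simp add: pow_Suc_left[of BB n] assoc_mult_mat[of _ n n _ n _ n] del: pow_mat.simps)
    have h: "(D * BB) * BB ^\<^sub>m (m - 1 - i) = D * BB ^\<^sub>m (Suc m - 1 - i)" if "i < m" for i
    proof -
      have "Suc m - 1 - i = Suc (m - 1 - i)" using that by auto
      then show ?thesis by (simp only: k)
    qed
    have s: "(\<Sum>i<m. sumall ((D * BB) * BB ^\<^sub>m (m - 1 - i)) * sumall (AA ^\<^sub>m i)) =
      (\<Sum>i<m. sumall (D * BB ^\<^sub>m (Suc m - 1 - i)) * sumall (AA ^\<^sub>m i))"
      by (rule sum.cong) (auto simp only: h lessThan_iff)
    show ?thesis using Suc.IH[of "D * BB"] D by (simp only: s mult_carrier_nn B_carrier, simp only: k)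
  qed
  show ?case using e IH D by (simp add: algebra_simps)
qed

lemma T_lemma: "D \<in> carrier_mat n n \<Longrightarrow> mat_trace (AA ^\<^sub>m m * D) =
   mat_trace (BB ^\<^sub>m m * D) + x * (\<Sum>i<m. sumall (BB ^\<^sub>m (m - 1 - i) * D * AA ^\<^sub>m i))"
proof (induction m arbitrary: D)
  case 0 then show ?case by simp
next
  case (Suc m)
  have D: "D \<in> carrier_mat n n" by fact
  have "AA ^\<^sub>m Suc m * D = AA ^\<^sub>m m * (AA * D)"
    using D by (simp, subst assoc_mult_mat[of _ n n _ n _ n], auto)
  also have "\<dots> = AA ^\<^sub>m m * (BB * D) + x \<cdot>\<^sub>m (AA ^\<^sub>m m * J_mat n * D)"
  proof -
    have c1: "BB * D \<in> carrier_mat n n" "J_mat n * D \<in> carrier_mat n n"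
      using D by (auto intro!: mult_carrier_mat[of _ n n D n])
    have "AA ^\<^sub>m m * (AA * D) = AA ^\<^sub>m m * (BB * D + x \<cdot>\<^sub>m (J_mat n * D))"
      using D by (simp add: AA_left[of _ n])
    also have "\<dots> = AA ^\<^sub>m m * (BB * D) + AA ^\<^sub>m m * (x \<cdot>\<^sub>m (J_mat n * D))"
      by (rule mult_add_distrib_mat[of _ n n _ n]) (use c1 in auto)
    also have "AA ^\<^sub>m m * (x \<cdot>\<^sub>m (J_mat n * D)) = x \<cdot>\<^sub>m (AA ^\<^sub>m m * (J_mat n * D))"
      by (rule mult_smult_distrib[of _ n n _ n]) (use c1 in auto)
    also have "AA ^\<^sub>m m * (J_mat n * D) = AA ^\<^sub>m m * J_mat n * D"
      using D by (subst assoc_mult_mat[of _ n n _ n _ n], auto)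
    finally show ?thesis .
  qed
  finally have e: "mat_trace (AA ^\<^sub>m Suc m * D) = mat_trace (AA ^\<^sub>m m * (BB * D)) + x * sumall (D * AA ^\<^sub>m m)"
    using D by (simp add: trace_add[of _ n] trace_smult[of _ n] trace_J[of _ n] del: pow_mat.simps)
  have IH: "mat_trace (AA ^\<^sub>m m * (BB * D)) = mat_trace (BB ^\<^sub>m Suc m * D) + x * (\<Sum>i<m. sumall (BB ^\<^sub>m (Suc m - 1 - i) * D * AA ^\<^sub>m i))"
  proof -
    have k: "\<And>k. BB ^\<^sub>m k * (BB * D) = BB ^\<^sub>m Suc k * D"
      using D by (simp add: assoc_mult_mat[of _ n n _ n _ n])
    have h: "BB ^\<^sub>m (m - 1 - i) * (BB * D) = BB ^\<^sub>m (Suc m - 1 - i) * D" if "i < m" for i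
    proof -
      have "Suc m - 1 - i = Suc (m - 1 - i)" using that by auto
      then show ?thesis by (simp only: k)
    qed
    have s: "(\<Sum>i<m. sumall (BB ^\<^sub>m (m - 1 - i) * (BB * D) * AA ^\<^sub>m i)) =
      (\<Sum>i<m. sumall (BB ^\<^sub>m (Suc m - 1 - i) * D * AA ^\<^sub>m i))"
      by (rule sum.cong) (auto simp only: h lessThan_iff)
    show ?thesis using Suc.IH[of "BB * D"] D by (simp only: s mult_carrier_nn B_carrier, simp only: k)
  qed
  show ?case using e IH D by (simp add: algebra_simps)
qed

definition "uu k = sumall (BB ^\<^sub>m k)"
definition "ss k = sumall (AA ^\<^sub>m k)"

lemma F1: "ss m = uu m + x * (\<Sum>i<m. uu (m - 1 - i) * ss i)"
  using L_lemma[of "1\<^sub>m n" m] unfolding uu_def ss_def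
  by (simp add: left_mult_one_mat[of _ n n])

lemma F2: "sumall (BB ^\<^sub>m j * AA ^\<^sub>m k) = uu (j + k) + x * (\<Sum>i<k. uu (j + k - 1 - i) * ss i)"
proof -
  have "(\<Sum>i<k. sumall (BB ^\<^sub>m j * BB ^\<^sub>m (k - 1 - i)) * sumall (AA ^\<^sub>m i)) = (\<Sum>i<k. uu (j + k - 1 - i) * ss i)"
  proof (rule sum.cong)
    fix i assume "i \<in> {..<k}"
    then have "j + (k - 1 - i) = j + k - 1 - i" by auto
    then show "sumall (BB ^\<^sub>m j * BB ^\<^sub>m (k - 1 - i)) * sumall (AA ^\<^sub>m i) = uu (j + k - 1 - i) * ss i"
      unfolding uu_def ss_def by (simp add: pow_add_mat[of _ n] del: pow_mat.simps)
  qed simp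
  then show ?thesis using L_lemma[of "BB ^\<^sub>m j" k]
    unfolding uu_def ss_def by (simp add: pow_add_mat[of _ n] del: pow_mat.simps)
qed

lemma F3: "mat_trace (AA ^\<^sub>m m) = mat_trace (BB ^\<^sub>m m) +
   x * (\<Sum>i<m. uu (m - 1) + x * (\<Sum>l<i. uu (m - 2 - l) * ss l))"
proof -
  have T: "mat_trace (AA ^\<^sub>m m) = mat_trace (BB ^\<^sub>m m) + x * (\<Sum>i<m. sumall (BB ^\<^sub>m (m - 1 - i) * AA ^\<^sub>m i))"
    using T_lemma[of "1\<^sub>m n" m] by (simp add: right_mult_one_mat[of _ n n])
  have "(\<Sum>i<m. sumall (BB ^\<^sub>m (m - 1 - i) * AA ^\<^sub>m i)) = (\<Sum>i<m. uu (m - 1) + x * (\<Sum>l<i. uu (m - 2 - l) * ss l))"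
  proof (rule sum.cong)
    fix i assume i: "i \<in> {..<m}"
    have a: "m - 1 - i + i = m - 1" using i by auto
    have b: "(\<Sum>l<i. uu (m - 1 - i + i - 1 - l) * ss l) = (\<Sum>l<i. uu (m - 2 - l) * ss l)"
      by (rule sum.cong) (use i in auto)
    show "sumall (BB ^\<^sub>m (m - 1 - i) * AA ^\<^sub>m i) = uu (m - 1) + x * (\<Sum>l<i. uu (m - 2 - l) * ss l)"
      unfolding F2 b[symmetric] a ..
  qed simp
  then show ?thesis using T by simp
qed

definition "UU = Abs_fps uu"
definition "SS = Abs_fps ss"
definition "VV = fps_deriv (fps_X * UU)"

lemma G1: "SS = UU + fps_const x * fps_X * (SS * UU)"
proof (rule fps_ext)
  fix m
  show "fps_nth SS m = fps_nth (UU + fps_const x * fps_X * (SS * UU)) m"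
  proof (cases m)
    case 0 then show ?thesis using F1[of 0] by (simp add: SS_def UU_def mult.assoc)
  next
    case (Suc r)
    have "fps_nth (SS * UU) r = (\<Sum>i<Suc r. uu (Suc r - 1 - i) * ss i)"
      unfolding fps_mult_nth SS_def UU_def
      by (simp add: atLeast0AtMost lessThan_Suc_atMost mult.commute)
    then show ?thesis using F1[of m] Suc by (simp add: SS_def UU_def mult.assoc)
  qed
qed

lemma VV_nth: "fps_nth VV k = of_nat (Suc k) * uu k"
  by (simp add: VV_def UU_def algebra_simps)

lemma G2: "M_fps AA - M_fps BB = fps_const x * fps_X * (VV + fps_const x * fps_X * (SS * VV))"
proof (rule fps_ext)
  fix m
  show "fps_nth (M_fps AA - M_fps BB) m = fps_nth (fps_const x * fps_X * (VV + fps_const x * fps_X * (SS * VV))) m"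
  proof (cases m)
    case 0 then show ?thesis by (simp add: M_fps_def mat_trace_def)
  next
    case (Suc p)
    have lhs: "fps_nth (M_fps AA - M_fps BB) m = x * (of_nat (Suc p) * uu p + x * (\<Sum>i<Suc p. \<Sum>l<i. uu (p - 1 - l) * ss l))"
      using F3[of m] Suc by (simp add: M_fps_def sum.distrib sum_distrib_left algebra_simps)
    have r: "fps_nth (fps_X * (SS * VV)) p = (\<Sum>l<p. of_nat (p - l) * (uu (p - 1 - l) * ss l))"
    proof (cases p)
      case 0 then show ?thesis by simp
    next
      case (Suc r)
      have "fps_nth (SS * VV) r = (\<Sum>l<Suc r. ss l * (of_nat (Suc (r - l)) * uu (r - l)))"
        unfolding fps_mult_nth by (simp add: SS_def VV_nth atLeast0AtMost lessThan_Suc_atMost)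
      also have "\<dots> = (\<Sum>l<Suc r. of_nat (Suc r - l) * (uu (Suc r - 1 - l) * ss l))"
        by (rule sum.cong) (auto simp: Suc_diff_le)
      finally show ?thesis using Suc by simp
    qed
    show ?thesis unfolding lhs DS using Suc r
      by (simp add: VV_nth mult.assoc)
  qed
qed

lemma main_ctx:
  assumes n0: "n \<noteq> 0"
  shows "M_fps AA =
     (fps_const (of_nat n * x) * fps_X * fps_deriv (fps_X * Mt_fps BB))
       / (1 - fps_const (of_nat n * x) * fps_X * Mt_fps BB)
     + M_fps BB"
proof -
  define c where "c = fps_const x * fps_X"
  have om: "omega (BB ^\<^sub>m k) = uu k / of_nat n" for k
    by (simp add: omega_def uu_def sumall_def)
  have e1: "fps_const (of_nat n * x) * fps_X * Mt_fps BB = c * UU"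
    by (rule fps_ext) (simp add: c_def UU_def Mt_fps_def om n0 mult.assoc)
  have e2: "fps_const (of_nat n * x) * fps_X * fps_deriv (fps_X * Mt_fps BB) = c * VV"
  proof -
    have xm: "fps_X * Mt_fps BB = fps_const (1 / of_nat n) * (fps_X * UU)"
      by (rule fps_ext) (simp add: UU_def Mt_fps_def om)
    have cc: "fps_const (of_nat n * x) * fps_const (1 / of_nat n) = fps_const x"
      using n0 by (simp only: fps_const_mult) simp
    have "fps_const (of_nat n * x) * fps_X * fps_deriv (fps_X * Mt_fps BB)
       = fps_X * ((fps_const (of_nat n * x) * fps_const (1 / of_nat n)) * VV)"
      unfolding xm VV_def fps_deriv_mult_const_left by (simp only: ac_simps)
    then show ?thesis unfolding cc c_def by (simp add: ac_simps)
  qed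
  define D where "D = 1 - c * UU"
  have D0: "fps_nth D 0 \<noteq> 0" by (simp add: D_def c_def)
  have g1: "SS = UU + c * (SS * UU)" using G1 by (simp add: c_def)
  have "(1 + c * SS) * D = 1 + c * (SS - UU - c * (SS * UU))"
    by (simp add: D_def algebra_simps)
  also have "SS - UU - c * (SS * UU) = 0" by (subst g1) simp
  finally have inv1: "(1 + c * SS) * D = 1" by simp
  have invD: "inverse D = 1 + c * SS"
  proof -
    have "inverse D = inverse D * ((1 + c * SS) * D)" using inv1 by simp
    also have "\<dots> = (1 + c * SS) * (inverse D * D)" by (simp add: ac_simps)
    also have "inverse D * D = 1" using D0 by (rule inverse_mult_eq_1)
    finally show ?thesis by simp
  qed
  have g2: "M_fps AA = c * (VV + c * (SS * VV)) + M_fps BB"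
    using G2 by (simp add: c_def algebra_simps)
  show ?thesis
    unfolding e1 e2 D_def[symmetric] fps_divide_unit[OF D0] invD g2
    by (simp add: algebra_simps)
qed

end

theorem lemma4p3:
  fixes n :: nat and x :: complex
  assumes "n \<ge> 2"
  shows "M_fps (x \<cdot>\<^sub>m J_mat n + B_mat n) =
     (fps_const (of_nat n * x) * fps_X * fps_deriv (fps_X * Mt_fps (B_mat n)))
       / (1 - fps_const (of_nat n * x) * fps_X * Mt_fps (B_mat n))
     + M_fps (B_mat n)"
  using main_ctx[of n x] assms by simp

end
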